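(* Let $\Gamma$ be a simple graph with $n$ vertices having exactly $m$ universal vertices, where $1\leqslant m<n$. Then the number $\kappa(\Gamma)$ of spanning trees of $\Gamma$ is divisible by $n^{m-1}$.
   Context: A universal vertex of a graph is a vertex adjacent to all other vertices. *)

theory Defs
  imports Main
begin

definition simple_graph :: "'a set \<Rightarrow> 'a set set \<Rightarrow> bool" where
  "simple_graph V E \<longleftrightarrow> finite V \<and> (\<forall>e\<in>E. e \<subseteq> V \<and> card e = 2)"

definition universal_vertex :: "'a set \<Rightarrow> 'a set set \<Rightarrow> 'a \<Rightarrow> bool" where
  "universal_vertex V E v \<longleftrightarrow> v \<in> V \<and> (\<forall>u\<in>V. u \<noteq> v \<longrightarrow> {u, v} \<in> E)"

definition connected_graph :: "'a set \<Rightarrow> 'a set set \<Rightarrow> bool" where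
  "connected_graph V E \<longleftrightarrow> V \<noteq> {} \<and>
     (\<forall>u\<in>V. \<forall>v\<in>V. (u, v) \<in> {(x, y). {x, y} \<in> E}\<^sup>*)"

definition is_cycle :: "'a set set \<Rightarrow> 'a list \<Rightarrow> bool" where
  "is_cycle E cs \<longleftrightarrow> length cs \<ge> 3 \<and> distinct cs \<and>
     (\<forall>i < length cs - 1. {cs ! i, cs ! (i + 1)} \<in> E) \<and> {last cs, hd cs} \<in> E"

definition acyclic_graph :: "'a set set \<Rightarrow> bool" where
  "acyclic_graph E \<longleftrightarrow> (\<nexists>cs. is_cycle E cs)"

definition spanning_tree :: "'a set \<Rightarrow> 'a set set \<Rightarrow> 'a set set \<Rightarrow> bool" where
  "spanning_tree V E T \<longleftrightarrow> T \<subseteq> E \<and> connected_graph V T \<and> acyclic_graph T"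

definition num_spanning_trees :: "'a set \<Rightarrow> 'a set set \<Rightarrow> nat" where
  "num_spanning_trees V E = card {T. spanning_tree V E T}"

end

theory Submission imports Defs "HOL-Library.FuncSet" begin

definition Fo :: "'a set \<Rightarrow> 'a set set \<Rightarrow> 'a set \<Rightarrow> ('a \<Rightarrow> 'a) set" where
  "Fo V E S = {p. (\<forall>v. v \<notin> V - S \<longrightarrow> p v = v) \<and> (\<forall>v\<in>V - S. {v, p v} \<in> E)
      \<and> (\<forall>v\<in>V. \<exists>k. (p ^^ k) v \<in> S)}"

definition reach :: "('a \<Rightarrow> 'a) \<Rightarrow> 'a \<Rightarrow> 'a \<Rightarrow> bool" where
  "reach p y x \<longleftrightarrow> (\<exists>k. (p ^^ k) y = x)"

definition sw :: "'a \<Rightarrow> 'a \<Rightarrow> 'a \<Rightarrow> 'a" where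
  "sw a b z = (if z = a then b else if z = b then a else z)"

lemma funpow_upd_avoid:
  assumes "\<forall>i<k. (f ^^ i) v \<noteq> u"
  shows "((f(u := z)) ^^ k) v = (f ^^ k) v"
  using assms
proof (induction k)
  case 0 then show ?case by simp
next
  case (Suc k)
  have "\<forall>i<k. (f ^^ i) v \<noteq> u" using Suc.prems by auto
  then have "((f(u := z)) ^^ k) v = (f ^^ k) v" using Suc.IH by blast
  moreover have "(f ^^ k) v \<noteq> u" using Suc.prems by auto
  ultimately show ?case by (simp del: fun_upd_apply) (simp)
qed

lemma reach_upd:
  assumes "(f ^^ i) v = u"
  shows "\<exists>i. ((f(u := z)) ^^ i) v = u"
proof -
  define j where "j = (LEAST i. (f ^^ i) v = u)"
  have j: "(f ^^ j) v = u" unfolding j_def by (rule LeastI[of _ i], rule assms)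
  have "\<forall>i<j. (f ^^ i) v \<noteq> u" unfolding j_def using not_less_Least by blast
  then have "((f(u := z)) ^^ j) v = (f ^^ j) v" by (rule funpow_upd_avoid)
  with j show ?thesis by auto
qed

lemma least_hit:
  assumes "(f ^^ i) v = u"
  shows "\<exists>j. (f ^^ j) v = u \<and> (\<forall>i<j. (f ^^ i) v \<noteq> u)"
proof -
  define j where "j = (LEAST i. (f ^^ i) v = u)"
  have j: "(f ^^ j) v = u" unfolding j_def by (rule LeastI[of _ i], rule assms)
  have "\<forall>i<j. (f ^^ i) v \<noteq> u" unfolding j_def using not_less_Least by blast
  with j show ?thesis by blast
qed

lemma funpow_periodic:
  assumes "(f ^^ Suc k) u = u"
  shows "(f ^^ j) u = (f ^^ (j mod Suc k)) u"
proof -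
  have m: "(f ^^ (t * Suc k)) u = u" for t
  proof (induction t)
    case 0 then show ?case by simp
  next
    case (Suc t)
    have e: "Suc t * Suc k = t * Suc k + Suc k" by simp
    have "(f ^^ (Suc t * Suc k)) u = (f ^^ (t * Suc k)) ((f ^^ Suc k) u)"
      unfolding e funpow_add by simp
    then show ?case using Suc assms by simp
  qed
  have "j = j mod Suc k + (j div Suc k) * Suc k" by (metis mod_div_mult_eq add.commute)
  then have "(f ^^ j) u = (f ^^ (j mod Suc k)) ((f ^^ ((j div Suc k) * Suc k)) u)"
    by (metis comp_apply funpow_add)
  with m show ?thesis by simp
qed

locale sg =
  fixes V :: "'a set" and E :: "'a set set"
  assumes sg: "simple_graph V E"
begin


lemma finV: "finite V" using sg by (simp add: simple_graph_def)

lemma edge: "e \<in> E \<Longrightarrow> \<exists>a b. e = {a, b} \<and> a \<noteq> b \<and> a \<in> V \<and> b \<in> V"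
  using sg unfolding simple_graph_def by (metis card_2_iff insert_subset)

lemma edge2: "{a, b} \<in> E \<Longrightarrow> a \<noteq> b \<and> a \<in> V \<and> b \<in> V"
  using edge by (metis doubleton_eq_iff)

lemma Fo_D:
  assumes "p \<in> Fo V E S"
  shows "\<And>v. v \<notin> V - S \<Longrightarrow> p v = v" "\<And>v. v \<in> V - S \<Longrightarrow> {v, p v} \<in> E"
    "\<And>v. v \<in> V \<Longrightarrow> \<exists>k. (p ^^ k) v \<in> S"
  using assms unfolding Fo_def by auto

lemma Fo_V: "p \<in> Fo V E S \<Longrightarrow> v \<in> V \<Longrightarrow> p v \<in> V"
  using Fo_D edge2 by (metis DiffI)

lemma Fo_Vk: "p \<in> Fo V E S \<Longrightarrow> v \<in> V \<Longrightarrow> (p ^^ k) v \<in> V"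
  by (induction k) (auto simp: Fo_V)

lemma Fo_fix: "p \<in> Fo V E S \<Longrightarrow> x \<in> S \<Longrightarrow> (p ^^ k) x = x"
  by (induction k) (auto dest: Fo_D)

lemma Fo_unique:
  assumes "p \<in> Fo V E S" "x1 \<in> S" "x2 \<in> S" "reach p y x1" "reach p y x2"
  shows "x1 = x2"
proof -
  obtain k1 k2 where k: "(p ^^ k1) y = x1" "(p ^^ k2) y = x2" using assms unfolding reach_def by auto
  show ?thesis
  proof (cases "k1 \<le> k2")
    case True
    then have "(p ^^ k2) y = (p ^^ (k2 - k1)) ((p ^^ k1) y)"
      by (metis comp_apply funpow_add le_add_diff_inverse2)
    then show ?thesis using k Fo_fix assms by metis
  next
    case False
    then have "(p ^^ k1) y = (p ^^ (k1 - k2)) ((p ^^ k2) y)"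
      by (metis comp_apply funpow_add le_add_diff_inverse2 nat_le_linear)
    then show ?thesis using k Fo_fix assms by metis
  qed
qed

lemma Fo_finite: "finite (Fo V E S)"
proof -
  have "(\<lambda>p. restrict p V) ` Fo V E S \<subseteq> PiE V (\<lambda>_. V)"
    using Fo_V by (auto simp: PiE_def extensional_def)
  then have "finite ((\<lambda>p. restrict p V) ` Fo V E S)"
    using finite_PiE finV by (metis finite_subset)
  moreover have "inj_on (\<lambda>p. restrict p V) (Fo V E S)"
  proof
    fix p q assume pq: "p \<in> Fo V E S" "q \<in> Fo V E S" "restrict p V = restrict q V"
    show "p = q"
    proof
      fix v show "p v = q v"
        using pq Fo_D(1)[OF pq(1), of v] Fo_D(1)[OF pq(2), of v] by (metis DiffD1 restrict_apply')
    qed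
  qed
  ultimately show ?thesis using finite_imageD by blast
qed


lemma univ_edge: "universal_vertex V E u \<Longrightarrow> y \<in> V \<Longrightarrow> y \<noteq> u \<Longrightarrow> {u, y} \<in> E"
  unfolding universal_vertex_def by (metis insert_commute)

lemma fwd:
  assumes p: "p \<in> Fo V E R" and u: "u \<in> V" "u \<notin> R"
  shows "p(u := u) \<in> Fo V E (insert u R)" "p u \<in> V" "\<not> reach (p(u := u)) (p u) u"
proof -
  let ?q = "p(u := u)"
  show "?q \<in> Fo V E (insert u R)"
    unfolding Fo_def
  proof (intro CollectI conjI ballI allI impI)
    fix v assume "v \<notin> V - insert u R"
    then show "?q v = v" using Fo_D(1)[OF p] by auto
  next
    fix v assume "v \<in> V - insert u R"
    then show "{v, ?q v} \<in> E" using Fo_D(2)[OF p] by auto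
  next
    fix v assume v: "v \<in> V"
    obtain k where k: "(p ^^ k) v \<in> R" using Fo_D(3)[OF p v] by auto
    show "\<exists>k. (?q ^^ k) v \<in> insert u R"
    proof (cases "\<exists>i. (p ^^ i) v = u")
      case True
      then obtain i where "(p ^^ i) v = u" by auto
      from reach_upd[OF this, of u] show ?thesis by auto
    next
      case False
      then have eq: "(?q ^^ k) v = (p ^^ k) v" by (intro funpow_upd_avoid) auto
      have "(?q ^^ k) v \<in> insert u R" unfolding eq using k by blast
      then show ?thesis by blast
    qed
  qed
  note qF = this
  show "p u \<in> V" using Fo_V[OF p u(1)] .
  show "\<not> reach ?q (p u) u"
  proof
    assume "reach ?q (p u) u"
    then obtain k0 where "(?q ^^ k0) (p u) = u" unfolding reach_def by auto
    from least_hit[OF this] obtain k where k: "(?q ^^ k) (p u) = u" "\<forall>i<k. (?q ^^ i) (p u) \<noteq> u"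
      by auto
    have pq: "?q(u := p u) = p" by simp
    have agree: "(p ^^ i) (p u) = (?q ^^ i) (p u)" if "i \<le> k" for i
    proof -
      have "((?q(u := p u)) ^^ i) (p u) = (?q ^^ i) (p u)"
        using k(2) that by (intro funpow_upd_avoid) auto
      then show ?thesis by (simp only: pq)
    qed
    have "(p ^^ Suc k) u = (p ^^ k) (p u)" by (simp only: funpow_Suc_right comp_apply)
    also have "\<dots> = (?q ^^ k) (p u)" using agree[of k] by simp
    finally have "(p ^^ Suc k) u = u" using k(1) by simp
    note per = funpow_periodic[OF this]
    obtain j where j: "(p ^^ j) u \<in> R" using Fo_D(3)[OF p u(1)] by auto
    define r where "r = j mod Suc k"
    have rj: "(p ^^ r) u \<in> R" using j per unfolding r_def by simp
    have "r \<noteq> 0"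
    proof
      assume "r = 0" then show False using rj u(2) by simp
    qed
    then obtain r' where r': "r = Suc r'" by (cases r) auto
    have "r < Suc k" unfolding r_def by simp
    then have "r' < k" using r' by simp
    have "(p ^^ r) u = (p ^^ r') (p u)" unfolding r' by (simp only: funpow_Suc_right comp_apply)
    also have "\<dots> = (?q ^^ r') (p u)" using agree \<open>r' < k\<close> by simp
    finally have inR: "(?q ^^ r') (p u) \<in> R" using rj by simp
    have kk: "k = (k - r') + r'" using \<open>r' < k\<close> by simp
    have "(?q ^^ k) (p u) = (?q ^^ (k - r')) ((?q ^^ r') (p u))"
      by (subst kk, simp only: funpow_add comp_apply)
    also have "\<dots> = (?q ^^ r') (p u)" using Fo_fix[OF qF] inR by blast
    finally show False using k(1) inR u(2) by simp
  qed
qed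

lemma bwd:
  assumes q: "q \<in> Fo V E (insert u R)" and u: "u \<in> V" "u \<notin> R" "universal_vertex V E u"
    and y: "y \<in> V" "\<not> reach q y u"
  shows "q(u := y) \<in> Fo V E R"
  unfolding Fo_def
proof (intro CollectI conjI ballI allI impI)
  let ?p = "q(u := y)"
  fix v assume "v \<notin> V - R"
  then show "?p v = v" using Fo_D(1)[OF q] u by auto
next
  let ?p = "q(u := y)"
  fix v assume v: "v \<in> V - R"
  show "{v, ?p v} \<in> E"
  proof (cases "v = u")
    case True
    have "y \<noteq> u" using y(2) unfolding reach_def by (metis funpow_0)
    then show ?thesis using True univ_edge[OF u(3) y(1)] by simp
  next
    case False
    then show ?thesis using v Fo_D(2)[OF q] by auto
  qed
next
  let ?p = "q(u := y)"
  have yR: "\<exists>k. (?p ^^ k) y \<in> R"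
  proof -
    obtain k where k: "(q ^^ k) y \<in> insert u R" using Fo_D(3)[OF q y(1)] by auto
    have nu: "\<forall>i. (q ^^ i) y \<noteq> u" using y(2) unfolding reach_def by auto
    then have eq: "(?p ^^ k) y = (q ^^ k) y" by (intro funpow_upd_avoid) auto
    have "(?p ^^ k) y \<in> R" unfolding eq using k nu by blast
    then show ?thesis by blast
  qed
  have uR: "\<exists>k. (?p ^^ k) u \<in> R"
  proof -
    obtain k where k: "(?p ^^ k) y \<in> R" using yR by auto
    have "(?p ^^ Suc k) u = (?p ^^ k) y" by (simp add: funpow_Suc_right del: funpow.simps)
    then show ?thesis using k by metis
  qed
  fix v assume v: "v \<in> V"
  show "\<exists>k. (?p ^^ k) v \<in> R"
  proof (cases "reach q v u")
    case True
    then obtain i0 where "(q ^^ i0) v = u" unfolding reach_def by auto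
    from least_hit[OF this] obtain i where i: "(q ^^ i) v = u" "\<forall>j<i. (q ^^ j) v \<noteq> u" by auto
    have "(?p ^^ i) v = u" using funpow_upd_avoid[OF i(2)] i(1) by simp
    moreover obtain k where k: "(?p ^^ k) u \<in> R" using uR by auto
    ultimately have "(?p ^^ (k + i)) v \<in> R" by (simp add: funpow_add)
    then show ?thesis by blast
  next
    case False
    obtain k where k: "(q ^^ k) v \<in> insert u R" using Fo_D(3)[OF q v] by auto
    have nu: "\<forall>i. (q ^^ i) v \<noteq> u" using False unfolding reach_def by auto
    then have eq: "(?p ^^ k) v = (q ^^ k) v" by (intro funpow_upd_avoid) auto
    have "(?p ^^ k) v \<in> R" unfolding eq using k nu by blast
    then show ?thesis by blast
  qed
qed

lemma step_card:
  assumes u: "u \<in> V" "u \<notin> R" "universal_vertex V E u"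
  shows "card (Fo V E R) = card {(q, y). q \<in> Fo V E (insert u R) \<and> y \<in> V \<and> \<not> reach q y u}"
proof (rule bij_betw_same_card[of "\<lambda>p. (p(u := u), p u)"], rule bij_betw_byWitness[where f' = "\<lambda>(q, y). q(u := y)"])
  show "\<forall>a\<in>Fo V E R. (case (a(u := u), a u) of (q, y) \<Rightarrow> q(u := y)) = a" by auto
  show "\<forall>a'\<in>{(q, y). q \<in> Fo V E (insert u R) \<and> y \<in> V \<and> \<not> reach q y u}.
       ((case a' of (q, y) \<Rightarrow> q(u := y))(u := u), (case a' of (q, y) \<Rightarrow> q(u := y)) u) = a'"
    using Fo_D(1) by fastforce
  show "(\<lambda>p. (p(u := u), p u)) ` Fo V E R \<subseteq> {(q, y). q \<in> Fo V E (insert u R) \<and> y \<in> V \<and> \<not> reach q y u}"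
    using fwd u by auto
  show "(\<lambda>(q, y). q(u := y)) ` {(q, y). q \<in> Fo V E (insert u R) \<and> y \<in> V \<and> \<not> reach q y u} \<subseteq> Fo V E R"
    using bwd u by auto
qed


lemma sw_sw[simp]: "sw a b (sw a b z) = z" unfolding sw_def by auto

lemma sw_in: "a \<in> A \<Longrightarrow> b \<in> A \<Longrightarrow> sw a b z \<in> A \<longleftrightarrow> z \<in> A" unfolding sw_def by auto

lemma sw_edge:
  assumes x: "universal_vertex V E x" and u: "universal_vertex V E u" and e: "e \<in> E"
  shows "sw x u ` e \<in> E"
proof -
  obtain a b where ab: "e = {a, b}" "a \<noteq> b" "a \<in> V" "b \<in> V" using edge[OF e] by auto
  have xV: "x \<in> V" and uV: "u \<in> V" using x u unfolding universal_vertex_def by auto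
  let ?s = "sw x u"
  have im: "?s ` e = {?s a, ?s b}" using ab by auto
  have ne: "?s a \<noteq> ?s b" using ab(2) by (metis sw_sw)
  have sV: "?s a \<in> V" "?s b \<in> V" using ab sw_in[OF xV uV] by auto
  show ?thesis
  proof (cases "?s a \<in> {x, u}")
    case True
    then have "universal_vertex V E (?s a)" using x u by auto
    then show ?thesis using univ_edge[OF _ sV(2)] ne im by auto
  next
    case False
    note fa = False
    show ?thesis
    proof (cases "?s b \<in> {x, u}")
      case True
      then have "universal_vertex V E (?s b)" using x u by auto
      then have "{?s b, ?s a} \<in> E" using univ_edge[OF _ sV(1)] ne by auto
      then show ?thesis using im by (simp add: insert_commute)
    next
      case False
      have "?s a = a" using fa unfolding sw_def by (auto split: if_splits)
      moreover have "?s b = b" using False unfolding sw_def by (auto split: if_splits)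
      ultimately show ?thesis using im ab e by simp
    qed
  qed
qed

lemma sw_funpow: "((sw x u \<circ> q \<circ> sw x u) ^^ k) z = sw x u ((q ^^ k) (sw x u z))"
  by (induction k arbitrary: z) auto

lemma sw_Fo:
  assumes x: "universal_vertex V E x" and u: "universal_vertex V E u" and xu: "x \<in> S" "u \<in> S"
    and q: "q \<in> Fo V E S"
  shows "sw x u \<circ> q \<circ> sw x u \<in> Fo V E S"
  unfolding Fo_def
proof (intro CollectI conjI ballI allI impI)
  have xV: "x \<in> V" and uV: "u \<in> V" using x u unfolding universal_vertex_def by auto
  let ?s = "sw x u"
  have sVS: "?s z \<in> V - S \<longleftrightarrow> z \<in> V - S" for z using sw_in[OF xV uV] sw_in[OF xu] by auto
  fix v
  assume "v \<notin> V - S"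
  then have "?s v \<notin> V - S" using sVS by auto
  then show "(?s \<circ> q \<circ> ?s) v = v" using Fo_D(1)[OF q] by simp
next
  have xV: "x \<in> V" and uV: "u \<in> V" using x u unfolding universal_vertex_def by auto
  let ?s = "sw x u"
  have sVS: "?s z \<in> V - S \<longleftrightarrow> z \<in> V - S" for z using sw_in[OF xV uV] sw_in[OF xu] by auto
  fix v
  assume "v \<in> V - S"
  then have "?s v \<in> V - S" using sVS by auto
  then have "{?s v, q (?s v)} \<in> E" using Fo_D(2)[OF q] by simp
  from sw_edge[OF x u this] show "{v, (?s \<circ> q \<circ> ?s) v} \<in> E" by simp
next
  have xV: "x \<in> V" and uV: "u \<in> V" using x u unfolding universal_vertex_def by auto
  let ?s = "sw x u"
  fix v assume "v \<in> V"
  then have "?s v \<in> V" using sw_in[OF xV uV] by auto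
  then obtain k where "(q ^^ k) (?s v) \<in> S" using Fo_D(3)[OF q] by blast
  then have "((?s \<circ> q \<circ> ?s) ^^ k) v \<in> S" unfolding sw_funpow using sw_in[OF xu] by auto
  then show "\<exists>k. ((?s \<circ> q \<circ> ?s) ^^ k) v \<in> S" by blast
qed

lemma sym_card:
  assumes x: "universal_vertex V E x" and u: "universal_vertex V E u" and xu: "x \<in> S" "u \<in> S"
    and Y: "\<And>z. sw x u z \<in> Y \<longleftrightarrow> z \<in> Y"
  shows "card {(q, y). q \<in> Fo V E S \<and> y \<in> Y \<and> reach q y x}
       = card {(q, y). q \<in> Fo V E S \<and> y \<in> Y \<and> reach q y u}"
proof (rule bij_betw_same_card[of "\<lambda>(q, y). (sw x u \<circ> q \<circ> sw x u, sw x u y)"],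
    rule bij_betw_byWitness[where f' = "\<lambda>(q, y). (sw x u \<circ> q \<circ> sw x u, sw x u y)"])
  let ?s = "sw x u"
  have ss: "?s \<circ> (?s \<circ> q \<circ> ?s) \<circ> ?s = q" for q by (rule ext) simp
  show "\<forall>a\<in>{(q, y). q \<in> Fo V E S \<and> y \<in> Y \<and> reach q y x}.
       (case case a of (q, y) \<Rightarrow> (?s \<circ> q \<circ> ?s, ?s y) of (q, y) \<Rightarrow> (?s \<circ> q \<circ> ?s, ?s y)) = a"
    using ss by auto
  show "\<forall>a\<in>{(q, y). q \<in> Fo V E S \<and> y \<in> Y \<and> reach q y u}.
       (case case a of (q, y) \<Rightarrow> (?s \<circ> q \<circ> ?s, ?s y) of (q, y) \<Rightarrow> (?s \<circ> q \<circ> ?s, ?s y)) = a"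
    using ss by auto
  have sx: "?s x = u" "?s u = x" unfolding sw_def by auto
  have r1: "reach (?s \<circ> q \<circ> ?s) (?s y) (?s z) \<longleftrightarrow> reach q y z" for q y z
    unfolding reach_def sw_funpow by (metis sw_sw)
  show "(\<lambda>(q, y). (?s \<circ> q \<circ> ?s, ?s y)) ` {(q, y). q \<in> Fo V E S \<and> y \<in> Y \<and> reach q y x}
    \<subseteq> {(q, y). q \<in> Fo V E S \<and> y \<in> Y \<and> reach q y u}"
  proof clarify
    fix q y assume a: "q \<in> Fo V E S" "y \<in> Y" "reach q y x"
    show "?s \<circ> q \<circ> ?s \<in> Fo V E S \<and> ?s y \<in> Y \<and> reach (?s \<circ> q \<circ> ?s) (?s y) u"
      using sw_Fo[OF x u xu a(1)] Y a r1[of q y x] sx by simp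
  qed
  show "(\<lambda>(q, y). (?s \<circ> q \<circ> ?s, ?s y)) ` {(q, y). q \<in> Fo V E S \<and> y \<in> Y \<and> reach q y u}
    \<subseteq> {(q, y). q \<in> Fo V E S \<and> y \<in> Y \<and> reach q y x}"
  proof clarify
    fix q y assume a: "q \<in> Fo V E S" "y \<in> Y" "reach q y u"
    show "?s \<circ> q \<circ> ?s \<in> Fo V E S \<and> ?s y \<in> Y \<and> reach (?s \<circ> q \<circ> ?s) (?s y) x"
      using sw_Fo[OF x u xu a(1)] Y a r1[of q y u] sx by simp
  qed
qed

lemma part_card:
  assumes T: "T \<subseteq> S" "finite T" and Y: "Y \<subseteq> V"
  shows "card {(q, y). q \<in> Fo V E S \<and> y \<in> Y \<and> (\<exists>x\<in>T. reach q y x)}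
     = (\<Sum>x\<in>T. card {(q, y). q \<in> Fo V E S \<and> y \<in> Y \<and> reach q y x})"
proof -
  let ?A = "\<lambda>x. {(q, y). q \<in> Fo V E S \<and> y \<in> Y \<and> reach q y x}"
  have eq: "{(q, y). q \<in> Fo V E S \<and> y \<in> Y \<and> (\<exists>x\<in>T. reach q y x)} = (\<Union>x\<in>T. ?A x)" by auto
  have fin: "finite (?A x)" for x
  proof (rule finite_subset)
    show "?A x \<subseteq> Fo V E S \<times> V" using Y by auto
    show "finite (Fo V E S \<times> V)" using Fo_finite finV by auto
  qed
  have disj: "\<forall>i\<in>T. \<forall>j\<in>T. i \<noteq> j \<longrightarrow> ?A i \<inter> ?A j = {}"
    using Fo_unique T(1) by blast
  show ?thesis unfolding eq by (rule card_UN_disjoint[OF T(2)]) (use fin disj in auto)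
qed


lemma all_reach:
  assumes "q \<in> Fo V E S" "y \<in> V"
  shows "\<exists>x\<in>S. reach q y x"
  using Fo_D(3)[OF assms] unfolding reach_def by blast

lemma rec_step:
  assumes U: "\<forall>x\<in>U. universal_vertex V E x" and RU: "R \<subseteq> U" and u: "u \<in> U" "u \<notin> R"
    and finR: "finite R"
  defines "M \<equiv> card {(q, y). q \<in> Fo V E (insert u R) \<and> y \<in> V \<and> reach q y u}"
  shows "card (Fo V E R) = card R * M" "card (Fo V E (insert u R)) * card V = Suc (card R) * M"
proof -
  let ?S = "insert u R"
  let ?A = "\<lambda>x. {(q, y). q \<in> Fo V E ?S \<and> y \<in> V \<and> reach q y x}"
  have uV: "u \<in> V" using U u unfolding universal_vertex_def by auto
  have Ax: "card (?A x) = M" if "x \<in> ?S" for x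
    unfolding M_def
    by (rule sym_card) (use U RU u that uV in \<open>auto simp: sw_in universal_vertex_def\<close>)
  have "card (Fo V E R) = card {(q, y). q \<in> Fo V E ?S \<and> y \<in> V \<and> \<not> reach q y u}"
    using step_card uV u U by auto
  also have "{(q, y). q \<in> Fo V E ?S \<and> y \<in> V \<and> \<not> reach q y u}
     = {(q, y). q \<in> Fo V E ?S \<and> y \<in> V \<and> (\<exists>x\<in>R. reach q y x)}"
  proof safe
    fix q y assume a: "q \<in> Fo V E ?S" "y \<in> V" "\<not> reach q y u"
    then show "\<exists>x\<in>R. reach q y x" using all_reach[OF a(1,2)] by auto
  next
    fix q y x assume a: "q \<in> Fo V E ?S" "y \<in> V" "x \<in> R" "reach q y x" "reach q y u"
    then have "x = u" using Fo_unique[OF a(1) _ _ a(4) a(5)] by auto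
    then show False using a(3) u(2) by simp
  qed
  also have "card \<dots> = (\<Sum>x\<in>R. card (?A x))"
    by (rule part_card) (use finR in auto)
  also have "\<dots> = card R * M" using Ax by simp
  finally show "card (Fo V E R) = card R * M" .
  have "card (Fo V E ?S) * card V = card (Fo V E ?S \<times> V)" by (simp add: card_cartesian_product)
  also have "Fo V E ?S \<times> V = {(q, y). q \<in> Fo V E ?S \<and> y \<in> V \<and> (\<exists>x\<in>?S. reach q y x)}"
    using all_reach by auto
  also have "card \<dots> = (\<Sum>x\<in>?S. card (?A x))"
    by (rule part_card) (use finR in auto)
  also have "\<dots> = card ?S * M" using Ax by simp
  finally show "card (Fo V E ?S) * card V = Suc (card R) * M" using finR u by simp
qed

lemma main_ind:
  assumes U: "\<forall>x\<in>U. universal_vertex V E x" and finU: "finite U"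
  shows "R \<subseteq> U \<Longrightarrow> card (U - R) = j \<Longrightarrow>
     card U * card (Fo V E R) = card R * card V ^ (card U - card R) * card (Fo V E U)"
proof (induction j arbitrary: R)
  case 0
  then have "U - R = {}" using finU by simp
  then have "R = U" using 0 by blast
  then show ?case by simp
next
  case (Suc j)
  then have "U - R \<noteq> {}" by auto
  then obtain u where u: "u \<in> U" "u \<notin> R" by auto
  have finR: "finite R" using Suc.prems finU finite_subset by blast
  let ?S = "insert u R"
  have e1: "U - ?S = (U - R) - {u}" by auto
  have "card ((U - R) - {u}) = card (U - R) - 1" using u finU by (intro card_Diff_singleton) auto
  then have "card (U - ?S) = j" using Suc.prems(2) e1 by simp
  then have IH: "card U * card (Fo V E ?S) = card ?S * card V ^ (card U - card ?S) * card (Fo V E U)"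
    using Suc.IH Suc.prems u by auto
  define M where "M = card {(q, y). q \<in> Fo V E (insert u R) \<and> y \<in> V \<and> reach q y u}"
  have a: "card (Fo V E R) = card R * M" and b: "card (Fo V E ?S) * card V = Suc (card R) * M"
    using rec_step[OF U Suc.prems(1) u finR] unfolding M_def by auto
  have cS: "card ?S = Suc (card R)" using finR u by simp
  have cle: "card ?S \<le> card U" using Suc.prems u finU by (intro card_mono) auto
  have ex: "card U - card R = Suc (card U - card ?S)" using cS cle by simp
  let ?n = "card V" and ?m = "card U" and ?k = "card R" and ?P = "card V ^ (card U - card ?S)"
  have "Suc ?k * (?m * card (Fo V E R)) = ?k * ?m * (Suc ?k * M)" using a by (simp add: algebra_simps)
  also have "\<dots> = ?k * ?m * card (Fo V E ?S) * ?n" using b by simp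
  also have "\<dots> = ?k * ?n * (?m * card (Fo V E ?S))" by simp
  also have "\<dots> = ?k * ?n * (Suc ?k * ?P * card (Fo V E U))" using IH cS by simp
  also have "\<dots> = Suc ?k * (?k * ?n ^ (?m - ?k) * card (Fo V E U))" using ex by (simp add: algebra_simps)
  finally have "Suc ?k * (?m * card (Fo V E R)) = Suc ?k * (?k * ?n ^ (?m - ?k) * card (Fo V E U))" .
  then show ?case unfolding mult_cancel_left by (elim disjE) simp_all
qed

lemma m_dvd:
  assumes U: "\<forall>x\<in>U. universal_vertex V E x" and finU: "finite U" and w: "w \<in> V" "w \<notin> U" and Une: "U \<noteq> {}"
  shows "card U dvd card (Fo V E U)"
proof -
  let ?A = "\<lambda>x. {(q, y). q \<in> Fo V E U \<and> y \<in> {w} \<and> reach q y x}"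
  have "card (Fo V E U) = card (Fo V E U \<times> {w})" by (simp add: card_cartesian_product)
  also have "Fo V E U \<times> {w} = {(q, y). q \<in> Fo V E U \<and> y \<in> {w} \<and> (\<exists>x\<in>U. reach q y x)}"
    using all_reach w by auto
  also have "card \<dots> = (\<Sum>x\<in>U. card (?A x))"
    by (rule part_card) (use finU w in auto)
  finally have c: "card (Fo V E U) = (\<Sum>x\<in>U. card (?A x))" .
  show ?thesis
  proof -
    obtain u where u: "u \<in> U" using Une by auto
    have "card (?A x) = card (?A u)" if "x \<in> U" for x
      by (rule sym_card) (use U u that w in \<open>auto simp: sw_def\<close>)
    then have "card (Fo V E U) = card U * card (?A u)" using c by simp
    then show ?thesis by simp
  qed
qed


definition Tof :: "'a \<Rightarrow> ('a \<Rightarrow> 'a) \<Rightarrow> 'a set set" where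
  "Tof u0 p = (\<lambda>v. {v, p v}) ` (V - {u0})"

definition dep :: "'a \<Rightarrow> ('a \<Rightarrow> 'a) \<Rightarrow> 'a \<Rightarrow> nat" where
  "dep u0 p v = (LEAST k. (p ^^ k) v = u0)"

lemma dep_hit:
  assumes p: "p \<in> Fo V E {u0}" and v: "v \<in> V"
  shows "(p ^^ dep u0 p v) v = u0"
proof -
  obtain k where "(p ^^ k) v \<in> {u0}" using Fo_D(3)[OF p v] by auto
  then have "(p ^^ k) v = u0" by simp
  then show ?thesis unfolding dep_def by (rule LeastI)
qed

lemma dep_le: "(p ^^ k) v = u0 \<Longrightarrow> dep u0 p v \<le> k"
  unfolding dep_def by (rule Least_le)

lemma dep_u0: "dep u0 p u0 = 0"
  unfolding dep_def by (rule Least_eq_0) simp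

lemma dep_step:
  assumes p: "p \<in> Fo V E {u0}" and v: "v \<in> V" "v \<noteq> u0"
  shows "dep u0 p v = Suc (dep u0 p (p v))"
proof -
  have pv: "p v \<in> V" using Fo_V[OF p v(1)] .
  obtain k where k: "dep u0 p v = k" by auto
  have hk: "(p ^^ k) v = u0" using dep_hit[OF p v(1)] k by simp
  have "k \<noteq> 0" using hk v(2) by (cases k) auto
  then obtain k' where k': "k = Suc k'" by (cases k) auto
  have "(p ^^ k') (p v) = u0" using hk k' by (simp add: funpow_Suc_right del: funpow.simps)
  then have le1: "dep u0 p (p v) \<le> k'" by (rule dep_le)
  have h2: "(p ^^ Suc (dep u0 p (p v))) v = u0"
    using dep_hit[OF p pv] by (simp add: funpow_Suc_right del: funpow.simps)
  have "k \<le> Suc (dep u0 p (p v))" using dep_le[OF h2] k by simp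
  then show ?thesis using le1 k k' by simp
qed

lemma dep_pos: "p \<in> Fo V E {u0} \<Longrightarrow> v \<in> V \<Longrightarrow> v \<noteq> u0 \<Longrightarrow> dep u0 p v > 0"
proof -
  assume a: "p \<in> Fo V E {u0}" "v \<in> V" "v \<noteq> u0"
  have "dep u0 p v = Suc (dep u0 p (p v))" by (rule dep_step[OF a])
  then show ?thesis by simp
qed

lemma Tof_edge: "p \<in> Fo V E {u0} \<Longrightarrow> Tof u0 p \<subseteq> E"
  unfolding Tof_def using Fo_D(2) by auto

lemma Tof_memI: "x \<in> V \<Longrightarrow> x \<noteq> u0 \<Longrightarrow> {x, p x} \<in> Tof u0 p"
  unfolding Tof_def by auto

lemma Tof_par:
  assumes p: "p \<in> Fo V E {u0}" and e: "{z, y} \<in> Tof u0 p" and d: "dep u0 p y \<le> dep u0 p z"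
  shows "y = p z \<and> z \<noteq> u0 \<and> z \<in> V"
proof -
  obtain x where x: "x \<in> V" "x \<noteq> u0" "{z, y} = {x, p x}" using e unfolding Tof_def by auto
  have "z \<noteq> y" using e Tof_edge[OF p] edge2 by blast
  then have "(z = x \<and> y = p x) \<or> (z = p x \<and> y = x)" using x(3) by (auto simp: doubleton_eq_iff)
  then show ?thesis
  proof
    assume "z = x \<and> y = p x" then show ?thesis using x by auto
  next
    assume a: "z = p x \<and> y = x"
    have "dep u0 p y = Suc (dep u0 p z)" using dep_step[OF p x(1,2)] a by simp
    with d show ?thesis by simp
  qed
qed

lemma cyc_next:
  assumes c: "is_cycle T cs" and i: "i < length cs"
  shows "{cs ! i, cs ! (Suc i mod length cs)} \<in> T"
proof (cases "Suc i < length cs")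
  case True
  then show ?thesis using c unfolding is_cycle_def by auto
next
  case False
  then have i1: "i = length cs - 1" and ne: "cs \<noteq> []" using i by auto
  then have "Suc i mod length cs = 0" using i by simp
  then show ?thesis using c ne i1 unfolding is_cycle_def by (simp add: last_conv_nth hd_conv_nth)
qed

lemma Tof_acyclic:
  assumes p: "p \<in> Fo V E {u0}"
  shows "acyclic_graph (Tof u0 p)"
  unfolding acyclic_graph_def
proof
  assume "\<exists>cs. is_cycle (Tof u0 p) cs"
  then obtain cs where c: "is_cycle (Tof u0 p) cs" by auto
  let ?L = "length cs"
  have L3: "?L \<ge> 3" using c unfolding is_cycle_def by (elim conjE) assumption
  have dist: "distinct cs" using c unfolding is_cycle_def by (elim conjE) assumption
  have csV: "x \<in> V" if xcs: "x \<in> set cs" for x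
  proof -
    obtain i where i: "i < ?L" "cs ! i = x" using xcs unfolding in_set_conv_nth by blast
    have "{cs ! i, cs ! (Suc i mod ?L)} \<in> E" using cyc_next[OF c i(1)] Tof_edge[OF p] by blast
    from edge2[OF this] have "cs ! i \<in> V" by (elim conjE)
    then show ?thesis using i(2) by simp
  qed
  let ?D = "dep u0 p ` set cs"
  have "Max ?D \<in> ?D" using L3 by (intro Max_in) auto
  then obtain z where z: "z \<in> set cs" "dep u0 p z = Max ?D" by (elim imageE) (simp only: eq_commute)
  from z(1) obtain c0 where "c0 < ?L" "cs ! c0 = z" unfolding in_set_conv_nth by blast
  then have c0: "c0 < ?L" "dep u0 p (cs ! c0) = Max ?D" using z(2) by auto
  have mx: "dep u0 p (cs ! i) \<le> dep u0 p (cs ! c0)" if "i < ?L" for i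
    unfolding c0(2) using that by (intro Max_ge) auto
  define a where "a = Suc c0 mod ?L"
  define b where "b = (c0 + ?L - 1) mod ?L"
  have L0: "0 < ?L" using L3 by linarith
  have aL: "a < ?L" and bL: "b < ?L" unfolding a_def b_def using mod_less_divisor[OF L0] by blast+
  have bnext: "Suc b mod ?L = c0"
  proof -
    have "Suc b mod ?L = Suc (c0 + ?L - 1) mod ?L" unfolding b_def by (simp add: mod_Suc_eq)
    also have "Suc (c0 + ?L - 1) = c0 + ?L" using L3 by simp
    finally show ?thesis using c0(1) by simp
  qed
  have ab: "a \<noteq> b"
  proof (cases "c0 = 0")
    case True
    have "a = 1" unfolding a_def True using L3 by (simp add: mod_less)
    moreover have "b = ?L - 1" unfolding b_def True using L0 by (simp add: mod_less)
    ultimately show ?thesis using L3 by linarith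
  next
    case False
    have b1: "b = c0 - 1"
    proof -
      have e: "c0 + ?L - 1 = (c0 - 1) + ?L" using False by linarith
      have "(c0 - 1) < ?L" using c0(1) by linarith
      then show ?thesis unfolding b_def e mod_add_self2 by (simp add: mod_less)
    qed
    show ?thesis
    proof (cases "Suc c0 < ?L")
      case True
      then have "a = Suc c0" unfolding a_def by (simp add: mod_less)
      then show ?thesis using b1 by linarith
    next
      case F2: False
      then have "Suc c0 = ?L" using c0(1) by linarith
      then have "a = 0" unfolding a_def by simp
      then show ?thesis using b1 \<open>Suc c0 = ?L\<close> L3 by linarith
    qed
  qed
  have e1: "{cs ! c0, cs ! a} \<in> Tof u0 p" using cyc_next[OF c c0(1)] unfolding a_def .
  have e2: "{cs ! c0, cs ! b} \<in> Tof u0 p" using cyc_next[OF c bL] unfolding bnext by (simp add: insert_commute)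
  have "cs ! a = p (cs ! c0)" using Tof_par[OF p e1 mx[OF aL]] by simp
  moreover have "cs ! b = p (cs ! c0)" using Tof_par[OF p e2 mx[OF bL]] by simp
  ultimately have "cs ! a = cs ! b" by simp
  then show False using nth_eq_iff_index_eq[OF dist aL bL] ab by simp
qed

lemma Tof_connected:
  assumes p: "p \<in> Fo V E {u0}" and u0: "u0 \<in> V"
  shows "connected_graph V (Tof u0 p)"
  unfolding connected_graph_def
proof (intro conjI ballI)
  show "V \<noteq> {}" using u0 by auto
  let ?R = "{(x, y). {x, y} \<in> Tof u0 p}"
  have symR: "sym ?R" unfolding sym_def by (auto simp: insert_commute)
  have toroot: "(v, u0) \<in> ?R\<^sup>*" if v: "v \<in> V" for v
  proof -
    have pk: "(v, (p ^^ k) v) \<in> ?R\<^sup>*" for k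
    proof (induction k)
      case 0 then show ?case by simp
    next
      case (Suc k)
      let ?z = "(p ^^ k) v"
      have zV: "?z \<in> V" using Fo_Vk[OF p v] .
      have "(?z, p ?z) \<in> ?R\<^sup>="
      proof (cases "?z = u0")
        case True then show ?thesis using Fo_D(1)[OF p, of ?z] by auto
      next
        case False then show ?thesis using Tof_memI[OF zV False] by auto
      qed
      then have "(?z, p ?z) \<in> ?R\<^sup>*" by auto
      then show ?case using Suc.IH by simp
    qed
    then show ?thesis using pk[of "dep u0 p v"] dep_hit[OF p v] by simp
  qed
  fix a b assume a: "a \<in> V" and b: "b \<in> V"
  have "(u0, b) \<in> ?R\<^sup>*" using toroot[OF b] sym_rtrancl[OF symR] unfolding sym_def by blast
  then show "(a, b) \<in> ?R\<^sup>*" using toroot[OF a] by simp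
qed

lemma Tof_tree:
  assumes p: "p \<in> Fo V E {u0}" and u0: "u0 \<in> V"
  shows "spanning_tree V E (Tof u0 p)"
  unfolding spanning_tree_def using Tof_edge[OF p] Tof_connected[OF p u0] Tof_acyclic[OF p] by auto

lemma Tof_inj:
  assumes p1: "p1 \<in> Fo V E {u0}" and p2: "p2 \<in> Fo V E {u0}" and eq: "Tof u0 p1 = Tof u0 p2"
  shows "p1 = p2"
proof
  fix v
  show "p1 v = p2 v"
  proof (cases "v \<in> V - {u0}")
    case False
    then show ?thesis using Fo_D(1)[OF p1] Fo_D(1)[OF p2] by auto
  next
    case True
    show ?thesis
    proof (rule ccontr)
      assume ne: "p1 v \<noteq> p2 v"
      let ?P = "\<lambda>z. z \<in> V - {u0} \<and> p1 z \<noteq> p2 z"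
      have stepP: "?P (p2 z)" if Pz: "?P z" for z
      proof -
        let ?y = "p2 z"
        have "{z, ?y} \<in> Tof u0 p1" using Tof_memI[of z u0 p2] Pz eq by auto
        then obtain x where x: "x \<in> V" "x \<noteq> u0" "{z, ?y} = {x, p1 x}" unfolding Tof_def by auto
        have "z \<noteq> x \<or> ?y \<noteq> p1 x" using Pz by auto
        then have zy: "z = p1 x" "?y = x" using x(3) by (auto simp: doubleton_eq_iff)
        have "p2 ?y \<noteq> z"
        proof
          assume c: "p2 ?y = z"
          have orb: "(p2 ^^ k) z \<in> {z, ?y}" for k
          proof (induction k)
            case 0 then show ?case by simp
          next
            case (Suc k) then show ?case using c by auto
          qed
          obtain k where "(p2 ^^ k) z \<in> {u0}" using Fo_D(3)[OF p2] Pz by blast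
          then show False using orb[of k] Pz zy x(2) by auto
        qed
        then show ?thesis using zy x by auto
      qed
      have "?P ((p2 ^^ k) v)" for k
        by (induction k) (use True ne stepP in auto)
      moreover obtain k where "(p2 ^^ k) v \<in> {u0}" using Fo_D(3)[OF p2] True by blast
      ultimately show False by auto
    qed
  qed
qed


lemma chain_dep:
  assumes p: "p \<in> Fo V E {u0}" and a: "a \<in> V"
  shows "t \<le> dep u0 p a \<Longrightarrow> dep u0 p ((p ^^ t) a) + t = dep u0 p a"
proof (induction t)
  case 0 then show ?case by simp
next
  case (Suc t)
  then have IH: "dep u0 p ((p ^^ t) a) + t = dep u0 p a" by simp
  let ?z = "(p ^^ t) a"
  have zV: "?z \<in> V" using Fo_Vk[OF p a] .
  have "dep u0 p ?z \<noteq> 0" using IH Suc.prems by linarith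
  then have "?z \<noteq> u0" using dep_u0 by metis
  then have "dep u0 p ?z = Suc (dep u0 p (p ?z))" by (rule dep_step[OF p zV])
  then show ?case using IH by simp
qed

lemma chain_ne:
  assumes p: "p \<in> Fo V E {u0}" and a: "a \<in> V" and t: "t < dep u0 p a"
  shows "(p ^^ t) a \<noteq> u0"
proof
  assume "(p ^^ t) a = u0"
  then have "dep u0 p ((p ^^ t) a) = 0" using dep_u0 by simp
  then show False using chain_dep[OF p a, of t] t by simp
qed

lemma chain_inj:
  assumes p: "p \<in> Fo V E {u0}" and a: "a \<in> V" and st: "s \<le> dep u0 p a" "t \<le> dep u0 p a"
    and eq: "(p ^^ s) a = (p ^^ t) a"
  shows "s = t"
  using chain_dep[OF p a st(1)] chain_dep[OF p a st(2)] eq by simp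

lemma chain_edge:
  assumes p: "p \<in> Fo V E {u0}" and a: "a \<in> V" and t: "t < dep u0 p a"
  shows "{(p ^^ t) a, (p ^^ Suc t) a} \<in> Tof u0 p"
  using Tof_memI[OF Fo_Vk[OF p a] chain_ne[OF p a t], of p] by simp

lemma mk_cycle:
  assumes L: "3 \<le> L" and inj: "inj_on f {..<L}"
    and ed: "\<And>t. Suc t < L \<Longrightarrow> {f t, f (Suc t)} \<in> T" and cl: "{f (L - 1), f 0} \<in> T"
  shows "is_cycle T (map f [0..<L])"
  unfolding is_cycle_def
proof (intro conjI allI impI)
  show "3 \<le> length (map f [0..<L])" using L by simp
  have "{0..<L} = {..<L}" by auto
  then show "distinct (map f [0..<L])" using inj by (simp add: distinct_map)
  fix i assume "i < length (map f [0..<L]) - 1"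
  then have "Suc i < L" by simp
  then show "{map f [0..<L] ! i, map f [0..<L] ! (i + 1)} \<in> T" using ed by simp
next
  have L0: "0 < L" using L by linarith
  have "last (map f [0..<L]) = f (L - 1)" using L0 by (simp add: last_map)
  moreover have "hd (map f [0..<L]) = f 0" using L0 by (simp add: hd_map)
  ultimately show "{last (map f [0..<L]), hd (map f [0..<L])} \<in> T" using cl by simp
qed

lemma tree_sub:
  assumes p: "p \<in> Fo V E {u0}" and sub: "Tof u0 p \<subseteq> T" and acy: "acyclic_graph T"
    and TE: "T \<subseteq> E" and e: "e \<in> T"
  shows "e \<in> Tof u0 p"
proof (rule ccontr)
  assume ne: "e \<notin> Tof u0 p"
  obtain a b where ab: "e = {a, b}" "a \<noteq> b" "a \<in> V" "b \<in> V" using edge[of e] e TE by blast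
  define A where "A t = (p ^^ t) a" for t
  define B where "B t = (p ^^ t) b" for t
  define da where "da = dep u0 p a"
  define db where "db = dep u0 p b"
  define P where "P i \<longleftrightarrow> (\<exists>j\<le>db. A i = B j)" for i
  have Pda: "P da" unfolding P_def A_def B_def da_def db_def using dep_hit[OF p ab(3)] dep_hit[OF p ab(4)] by auto
  define i0 where "i0 = (LEAST i. P i)"
  have Pi0: "P i0" unfolding i0_def by (rule LeastI[of P da], rule Pda)
  have i0da: "i0 \<le> da" unfolding i0_def by (rule Least_le, rule Pda)
  have minP: "\<not> P s" if "s < i0" for s using that unfolding i0_def by (rule not_less_Least)
  obtain j0 where j0: "j0 \<le> db" "A i0 = B j0" using Pi0 unfolding P_def by blast
  have Ainj: "s = t" if "s \<le> da" "t \<le> da" "A s = A t" for s t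
    using chain_inj[OF p ab(3)] that unfolding A_def da_def by blast
  have Binj: "s = t" if "s \<le> db" "t \<le> db" "B s = B t" for s t
    using chain_inj[OF p ab(4)] that unfolding B_def db_def by blast
  have Aedge: "{A t, A (Suc t)} \<in> T" if "t < da" for t
    using chain_edge[OF p ab(3)] that sub unfolding A_def da_def by blast
  have Bedge: "{B t, B (Suc t)} \<in> T" if "t < db" for t
    using chain_edge[OF p ab(4)] that sub unfolding B_def db_def by blast
  have A0: "A 0 = a" and B0: "B 0 = b" unfolding A_def B_def by simp_all
  have A1: "A (Suc 0) = p a" and B1: "B (Suc 0) = p b" unfolding A_def B_def by simp_all
  have a_ne: "a \<noteq> u0" if "0 < da" using chain_ne[OF p ab(3), of 0] that unfolding da_def by simp
  have b_ne: "b \<noteq> u0" if "0 < db" using chain_ne[OF p ab(4), of 0] that unfolding db_def by simp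
  define L where "L = i0 + j0 + 1"
  define f where "f t = (if t \<le> i0 then A t else B (i0 + j0 - t))" for t
  have L3: "3 \<le> L"
  proof (rule ccontr)
    assume "\<not> 3 \<le> L"
    then have "i0 + j0 \<le> 1" unfolding L_def by simp
    then consider "i0 = 0" "j0 = 0" | "i0 = 1" "j0 = 0" | "i0 = 0" "j0 = 1" by linarith
    then show False
    proof cases
      case 1 then show False using j0(2) A0 B0 ab(2) by simp
    next
      case 2
      then have "p a = b" using j0(2) A1 B0 by simp
      have an: "a \<noteq> u0" using a_ne i0da 2 by simp
      have "{a, p a} \<in> Tof u0 p" by (rule Tof_memI[OF ab(3) an])
      then show False using ne ab(1) \<open>p a = b\<close> by simp
    next
      case 3
      then have "p b = a" using j0(2) A0 B1 by simp
      have bn: "b \<noteq> u0" using b_ne j0(1) 3 by simp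
      have "{b, p b} \<in> Tof u0 p" by (rule Tof_memI[OF ab(4) bn])
      then show False using ne ab(1) \<open>p b = a\<close> by (simp add: insert_commute)
    qed
  qed
  have cross: False if "s \<le> i0" "r < j0" "A s = B r" for s r
  proof -
    have "P s" unfolding P_def using that j0(1) by (intro exI[of _ r]) simp
    then have "s = i0" using minP that(1) by (meson le_neq_implies_less)
    then have "B r = B j0" using that(3) j0(2) by simp
    then show False using Binj[of r j0] that(2) j0(1) by simp
  qed
  have inj: "inj_on f {..<L}"
  proof
    fix s t assume s: "s \<in> {..<L}" and t: "t \<in> {..<L}" and eq: "f s = f t"
    show "s = t"
    proof (cases "s \<le> i0")
      case True
      note sT = True
      show ?thesis
      proof (cases "t \<le> i0")
        case True
        then show ?thesis using sT eq Ainj[of s t] i0da unfolding f_def by simp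
      next
        case False
        then have x: "A s = B (i0 + j0 - t)" using sT eq unfolding f_def by simp
        have "i0 + j0 - t < j0" using False t unfolding L_def by auto
        from cross[OF sT this x] show ?thesis ..
      qed
    next
      case False
      note sF = False
      show ?thesis
      proof (cases "t \<le> i0")
        case True
        then have x: "A t = B (i0 + j0 - s)" using sF eq unfolding f_def by simp
        have "i0 + j0 - s < j0" using sF s unfolding L_def by auto
        from cross[OF True this x] show ?thesis ..
      next
        case False
        then have "B (i0 + j0 - s) = B (i0 + j0 - t)" using sF eq unfolding f_def by simp
        moreover have "i0 + j0 - s \<le> db" "i0 + j0 - t \<le> db" using j0(1) sF False by auto
        ultimately have "i0 + j0 - s = i0 + j0 - t" using Binj by blast
        then show ?thesis using s t sF False unfolding L_def by simp
      qed
    qed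
  qed
  have ed: "{f t, f (Suc t)} \<in> T" if st: "Suc t < L" for t
  proof (cases "t < i0")
    case True
    then show ?thesis using Aedge[of t] i0da unfolding f_def by simp
  next
    case False
    show ?thesis
    proof (cases "t = i0")
      case True
      then have j1: "j0 \<ge> 1" using st unfolding L_def by simp
      then have "j0 - 1 < db" using j0(1) by simp
      then have "{B (j0 - 1), B (Suc (j0 - 1))} \<in> T" by (rule Bedge)
      then have "{B j0, B (j0 - 1)} \<in> T" using j1 by (simp add: insert_commute)
      then show ?thesis using True j0(2) unfolding f_def by simp
    next
      case F2: False
      define s where "s = i0 + j0 - Suc t"
      have s1: "i0 + j0 - t = Suc s" using F2 False st unfolding s_def L_def by simp
      have "s < db" using st j0(1) F2 False unfolding s_def L_def by simp
      then have "{B s, B (Suc s)} \<in> T" by (rule Bedge)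
      then show ?thesis using F2 False s1 unfolding f_def s_def by (simp add: insert_commute)
    qed
  qed
  have cl: "{f (L - 1), f 0} \<in> T"
  proof -
    have "f (L - 1) = b"
    proof (cases "j0 = 0")
      case True then show ?thesis using j0(2) B0 unfolding f_def L_def by simp
    next
      case False then show ?thesis using B0 unfolding f_def L_def by simp
    qed
    moreover have "f 0 = a" using A0 unfolding f_def by simp
    ultimately show ?thesis using e ab(1) by (simp add: insert_commute)
  qed
  have "is_cycle T (map f [0..<L])" by (rule mk_cycle[OF L3 inj ed cl])
  then show False using acy unfolding acyclic_graph_def by blast
qed

lemma tree_par:
  assumes T: "spanning_tree V E T" and u0: "u0 \<in> V"
  shows "\<exists>p\<in>Fo V E {u0}. Tof u0 p = T"
proof -
  have TE: "T \<subseteq> E" and conn: "connected_graph V T" and acy: "acyclic_graph T"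
    using T unfolding spanning_tree_def by auto
  let ?R = "{(x, y). {x, y} \<in> T}"
  have cn: "\<exists>k. (v, u0) \<in> ?R ^^ k" if "v \<in> V" for v
    using conn that u0 unfolding connected_graph_def rtrancl_power by blast
  define dist where "dist v = (LEAST k. (v, u0) \<in> ?R ^^ k)" for v
  have dh: "(v, u0) \<in> ?R ^^ dist v" if "v \<in> V" for v
    using cn[OF that] unfolding dist_def by (elim exE) (rule LeastI)
  define p where "p v = (if v \<in> V \<and> v \<noteq> u0 then (SOME y. (v, y) \<in> ?R \<and> (y, u0) \<in> ?R ^^ (dist v - 1)) else v)" for v
  have pp: "(v, p v) \<in> ?R \<and> (p v, u0) \<in> ?R ^^ (dist v - 1)" if v: "v \<in> V" "v \<noteq> u0" for v
  proof -
    have "dist v \<noteq> 0" using dh[OF v(1)] v(2) by (cases "dist v") auto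
    then obtain d where d: "dist v = Suc d" by (cases "dist v") auto
    have "(v, u0) \<in> ?R ^^ Suc d" using dh[OF v(1)] d by simp
    from relpow_Suc_D2[OF this] have "\<exists>y. (v, y) \<in> ?R \<and> (y, u0) \<in> ?R ^^ (dist v - 1)"
      using d by simp
    then show ?thesis unfolding p_def using v by (simp only: if_True simp_thms) (rule someI_ex)
  qed
  have pT: "{v, p v} \<in> T" if "v \<in> V" "v \<noteq> u0" for v using pp[OF that] by simp
  have pV: "p v \<in> V" if "v \<in> V" for v
  proof (cases "v = u0")
    case True then show ?thesis using that unfolding p_def by simp
  next
    case False then show ?thesis using pT[OF that False] TE edge2 by blast
  qed
  have reach0: "\<forall>v. v \<in> V \<longrightarrow> (v, u0) \<in> ?R ^^ j \<longrightarrow> (\<exists>k. (p ^^ k) v = u0)" for j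
  proof (induction j rule: less_induct)
    case (less j)
    show ?case
    proof (intro allI impI)
      fix v assume v: "v \<in> V" and vj: "(v, u0) \<in> ?R ^^ j"
      show "\<exists>k. (p ^^ k) v = u0"
      proof (cases "v = u0")
        case True then show ?thesis by (intro exI[of _ 0]) simp
      next
        case False
        have "dist v \<le> j" unfolding dist_def using vj by (rule Least_le)
        moreover have "dist v \<noteq> 0" using dh[OF v] False by (cases "dist v") auto
        ultimately have "dist v - 1 < j" by linarith
        then obtain k where "(p ^^ k) (p v) = u0" using less.IH pV[OF v] pp[OF v False] by blast
        then have "(p ^^ Suc k) v = u0" by (simp add: funpow_Suc_right del: funpow.simps)
        then show ?thesis by blast
      qed
    qed
  qed
  have pF: "p \<in> Fo V E {u0}"
    unfolding Fo_def
  proof (intro CollectI conjI allI impI ballI)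
    fix v assume "v \<notin> V - {u0}" then show "p v = v" unfolding p_def by auto
  next
    fix v assume "v \<in> V - {u0}" then show "{v, p v} \<in> E" using pT TE by blast
  next
    fix v assume v: "v \<in> V"
    obtain j where "(v, u0) \<in> ?R ^^ j" using cn[OF v] by blast
    then obtain k where "(p ^^ k) v = u0" using reach0 v by blast
    then show "\<exists>k. (p ^^ k) v \<in> {u0}" by blast
  qed
  have sub: "Tof u0 p \<subseteq> T" unfolding Tof_def using pT by auto
  have "T \<subseteq> Tof u0 p" using tree_sub[OF pF sub acy TE] by blast
  then show ?thesis using sub pF by blast
qed

lemma count_trees:
  assumes u0: "u0 \<in> V"
  shows "num_spanning_trees V E = card (Fo V E {u0})"
proof -
  have "bij_betw (Tof u0) (Fo V E {u0}) {T. spanning_tree V E T}"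
    unfolding bij_betw_def
  proof
    show "inj_on (Tof u0) (Fo V E {u0})" using Tof_inj by (intro inj_onI) blast
    show "Tof u0 ` Fo V E {u0} = {T. spanning_tree V E T}"
      using Tof_tree[OF _ u0] tree_par[OF _ u0] by blast
  qed
  then show ?thesis unfolding num_spanning_trees_def by (simp add: bij_betw_same_card)
qed

end

theorem lemma3p2:
  fixes V :: "'a set" and E :: "'a set set" and n m :: nat
  assumes "simple_graph V E"
    and "card V = n"
    and "card {v \<in> V. universal_vertex V E v} = m"
    and "1 \<le> m" and "m < n"
  shows "n ^ (m - 1) dvd num_spanning_trees V E"
proof -
  interpret sg V E by unfold_locales (rule assms(1))
  define U where "U = {v \<in> V. universal_vertex V E v}"
  have finU: "finite U" unfolding U_def using finV by simp
  have Uuni: "\<forall>x\<in>U. universal_vertex V E x" unfolding U_def by simp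
  have cU: "card U = m" unfolding U_def using assms(3) .
  have "U \<noteq> {}" using cU assms(4) by auto
  then obtain u0 where u0: "u0 \<in> U" by auto
  have u0V: "u0 \<in> V" using u0 unfolding U_def by simp
  have "U \<noteq> V" using cU assms(2) assms(5) by auto
  moreover have "U \<subseteq> V" unfolding U_def by auto
  ultimately obtain w where w: "w \<in> V" "w \<notin> U" by blast
  have "card U * card (Fo V E {u0}) = card {u0} * card V ^ (card U - card {u0}) * card (Fo V E U)"
    using main_ind[OF Uuni finU, of "{u0}" "card (U - {u0})"] u0 by simp
  then have eq: "m * num_spanning_trees V E = n ^ (m - 1) * card (Fo V E U)"
    using cU assms(2) count_trees[OF u0V] by simp
  obtain B where B: "card (Fo V E U) = m * B"
    using m_dvd[OF Uuni finU w \<open>U \<noteq> {}\<close>] cU by (auto elim: dvdE)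
  have "m * num_spanning_trees V E = m * (n ^ (m - 1) * B)" using eq B by (simp add: algebra_simps)
  then have "num_spanning_trees V E = n ^ (m - 1) * B" using assms(4) by simp
  then show ?thesis by simp
qed

end
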